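(* Let $p>1$ and $\lambda>0$ be fixed, and define $\phi:(0,+\infty)\times[0,\pi/2)\to\mathbb{R}$ by $$\phi(R,\theta)=2\int_0^1\frac{ds}{\sqrt{\frac{1}{\cos^2\theta}-s^2+\frac{2R^{p-1}\cos^{p-1}\theta}{\lambda(p+1)}\,(1-s^{p+1})}}.$$ Then $\phi$ is continuous, takes values in $(0,+\infty)$, is of class $\mathcal{C}^1$ in $(0,+\infty)\times(0,\pi/2)$, and satisfies: (i) for each $\theta\in[0,\pi/2)$, $R\mapsto\phi(R,\theta)$ is decreasing, $\lim_{R\uparrow+\infty}\phi(R,\theta)=0$, and $\phi(R,\theta)<\lim_{R\downarrow0}\phi(R,\theta)=\pi-2\theta$ for all $R>0$; (ii) $\phi$ can be extended by continuity to $\theta=\pi/2$ by setting $\phi(\cdot,\pi/2)=0$; (iii) (with this extension) $\phi$ has a continuous derivative with respect to $\theta\in(0,\pi/2]$, and $\frac{\partial\phi}{\partial\theta}(R,\pi/2)=-2$ for every $R>0$. *)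

theory Defs
  imports "HOL-Analysis.Analysis"
begin

definition phi :: "real \<Rightarrow> real \<Rightarrow> real \<Rightarrow> real \<Rightarrow> real" where
  "phi p lam R \<theta> = 2 * integral {0..1} (\<lambda>s. 1 / sqrt (1 / (cos \<theta>)^2 - s^2
      + (2 * R powr (p - 1) * (cos \<theta>) powr (p - 1)) / (lam * (p + 1)) * (1 - s powr (p + 1))))"

definition phi_ext :: "real \<Rightarrow> real \<Rightarrow> real \<Rightarrow> real \<Rightarrow> real" where
  "phi_ext p lam R \<theta> = (if \<theta> = pi / 2 then 0 else phi p lam R \<theta>)"

end

theory Submission
  imports Defs "HOL-Real_Asymp.Real_Asymp"
begin

lemma param_cont:
  fixes f :: "'a::metric_space \<Rightarrow> real \<Rightarrow> real"
  assumes int: "\<And>x. x \<in> X \<Longrightarrow> f x integrable_on {0..1}"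
  and h: "h integrable_on {0..1}"
  and bd: "\<And>x s. x \<in> X \<Longrightarrow> s \<in> {0..<1} \<Longrightarrow> \<bar>f x s\<bar> \<le> h s"
  and ct: "\<And>s. s \<in> {0..<1} \<Longrightarrow> continuous_on X (\<lambda>x. f x s)"
  shows "continuous_on X (\<lambda>x. integral {0..1} (f x))"
proof (rule continuous_on_sequentiallyI)
  fix u a assume u: "\<forall>n. u n \<in> X" and a: "a \<in> X" and lim: "u \<longlonglongrightarrow> a"
  define g where "g x s = (if s = 1 then 0 else f x s)" for x s
  define h' where "h' s = (if s = 1 then 0 else h s)" for s
  have eq: "integral {0..1} (f x) = integral {0..1} (g x)" for x
    by (rule integral_spike[of "{1}"]) (auto simp: g_def)
  have gint: "g x integrable_on {0..1}" if "x \<in> X" for x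
    by (rule integrable_spike[OF int[OF that], of "{1}"]) (auto simp: g_def)
  have h'int: "h' integrable_on {0..1}"
    by (rule integrable_spike[OF h, of "{1}"]) (auto simp: h'_def)
  have "(\<lambda>k. integral {0..1} (g (u k))) \<longlonglongrightarrow> integral {0..1} (g a)"
  proof (rule dominated_convergence(2)[OF _ h'int])
    show "\<And>k. g (u k) integrable_on {0..1}" using gint u by auto
    show "norm (g (u k) s) \<le> h' s" if "s \<in> {0..1}" for k s
      using bd[of "u k" s] u that by (auto simp: g_def h'_def)
    show "(\<lambda>k. g (u k) s) \<longlonglongrightarrow> g a s" if "s \<in> {0..1}" for s
    proof (cases "s = 1")
      case True then show ?thesis by (simp add: g_def)
    next
      case False
      then have s: "s \<in> {0..<1}" using that by auto
      have "(\<lambda>k. f (u k) s) \<longlonglongrightarrow> f a s"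
        by (rule continuous_on_tendsto_compose[OF ct[OF s] lim a]) (use u in auto)
      then show ?thesis using False by (simp add: g_def)
    qed
  qed
  then show "(\<lambda>n. integral {0..1} (f (u n))) \<longlonglongrightarrow> integral {0..1} (f a)"
    by (simp add: eq)
qed

definition Fd :: "real \<Rightarrow> real \<Rightarrow> real \<Rightarrow> real \<Rightarrow> real" where
  "Fd p a c s = 1 - c^2 * s^2 + a * c powr (p+1) * (1 - s powr (p+1))"
definition FF :: "real \<Rightarrow> real \<Rightarrow> real \<Rightarrow> real \<Rightarrow> real" where
  "FF p a c s = 1 / sqrt (Fd p a c s)"
definition hh :: "real \<Rightarrow> real" where
  "hh s = 1 / sqrt (1 - s)"

lemma spow_le: fixes p s :: real assumes "p > 1" "0 \<le> s" "s \<le> 1" shows "s powr (p+1) \<le> s"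
proof -
  have "s powr (p+1) \<le> s powr 1" using powr_mono'[of 1 "p+1" s] assms by auto
  then show ?thesis using assms by (cases "s = 0") auto
qed

lemma Fd_lb:
  fixes p a c s :: real
  assumes "p > 1" "0 \<le> a" "0 \<le> c" "c \<le> 1" "0 \<le> s" "s \<le> 1"
  shows "Fd p a c s \<ge> (1 - s) * (1 + a * c powr (p+1))"
proof -
  have "c^2 * s^2 \<le> s"
  proof -
    have "c^2 \<le> 1" using assms by (simp add: power_le_one)
    moreover have "s^2 \<le> s" using assms by (simp add: power2_eq_square mult_left_le_one_le)
    moreover have "c^2 * s^2 \<le> 1 * s^2" by (rule mult_right_mono) (use \<open>c^2 \<le> 1\<close> in auto)
    ultimately show ?thesis by simp
  qed
  moreover have "a * c powr (p+1) * (1 - s) \<le> a * c powr (p+1) * (1 - s powr (p+1))"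
    using spow_le[of p s] assms by (intro mult_left_mono) auto
  ultimately show ?thesis unfolding Fd_def by (simp add: algebra_simps)
qed

lemma Fd_lb2:
  fixes p a c s :: real
  assumes "p > 1" "0 \<le> a" "0 \<le> c" "c \<le> b" "0 \<le> s" "s \<le> 1"
  shows "Fd p a c s \<ge> 1 - b^2"
proof -
  have "c^2 * s^2 \<le> b^2"
  proof -
    have "c^2 \<le> b^2" using assms by (simp add: power_mono)
    moreover have "s^2 \<le> 1" using assms by (simp add: power_le_one)
    moreover have "c^2 * s^2 \<le> b^2 * 1" by (rule mult_mono) (use \<open>c^2 \<le> b^2\<close> \<open>s^2 \<le> 1\<close> in auto)
    ultimately show ?thesis by simp
  qed
  moreover have "0 \<le> a * c powr (p+1) * (1 - s powr (p+1))"
    using spow_le[of p s] assms by (intro mult_nonneg_nonneg) auto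
  ultimately show ?thesis unfolding Fd_def by (simp add: algebra_simps)
qed

lemma Fd_pos:
  fixes p a c s :: real
  assumes "p > 1" "0 \<le> a" "0 \<le> c" "c \<le> 1" "0 \<le> s" "s < 1"
  shows "Fd p a c s > 0"
proof -
  have "a * c powr (p+1) \<ge> 0" using assms by simp
  then have "1 + a * c powr (p+1) > 0" by linarith
  then have "(1 - s) * (1 + a * c powr (p+1)) > 0" using assms by simp
  then show ?thesis using Fd_lb[of p a c s] assms by auto
qed

lemma FF_bound:
  fixes p a c s :: real
  assumes "p > 1" "0 \<le> a" "0 \<le> c" "c \<le> 1" "0 \<le> s" "s < 1"
  shows "0 < FF p a c s" "FF p a c s \<le> hh s / sqrt (1 + a * c powr (p+1))" "FF p a c s \<le> hh s"
proof -
  have pos: "Fd p a c s > 0" using Fd_pos assms by auto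
  then show "0 < FF p a c s" by (simp add: FF_def)
  have "a * c powr (p+1) \<ge> 0" using assms by simp
  then have k: "1 + a * c powr (p+1) \<ge> 1" by simp
  have q1: "sqrt ((1 - s) * (1 + a * c powr (p+1))) \<le> sqrt (Fd p a c s)"
    using Fd_lb[of p a c s] assms by simp
  have q2: "sqrt ((1 - s) * (1 + a * c powr (p+1))) > 0" proof -
    have k2: "1 + a * c powr (p+1) > 0" using k by linarith
    have "1 - s > 0" using assms by simp
    then show ?thesis using k2 by simp
  qed
  have "FF p a c s \<le> 1 / sqrt ((1 - s) * (1 + a * c powr (p+1)))"
    unfolding FF_def by (rule divide_left_mono[OF q1]) (use q1 q2 in auto)
  also have "\<dots> = hh s / sqrt (1 + a * c powr (p+1))"
    by (simp add: hh_def real_sqrt_mult)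
  finally show *: "FF p a c s \<le> hh s / sqrt (1 + a * c powr (p+1))" .
  have "hh s \<ge> 0" using assms by (simp add: hh_def)
  then have "hh s / sqrt (1 + a * c powr (p+1)) \<le> hh s"
  proof -
    have sq: "sqrt (1 + a * c powr (p+1)) \<ge> 1" using k by simp
    have "hh s / sqrt (1 + a * c powr (p+1)) \<le> hh s / 1"
      by (rule divide_left_mono[OF sq]) (use sq \<open>hh s \<ge> 0\<close> in auto)
    then show ?thesis by simp
  qed
  then show "FF p a c s \<le> hh s" using * by linarith
qed

lemma a1: "((\<lambda>s::real. 1 - s) has_real_derivative (0 - 1)) (at x)" by (intro derivative_intros)
lemma a2: "x < 1 \<Longrightarrow> (sqrt has_real_derivative inverse (sqrt (1 - x)) / 2) (at (1 - x))"
      by (rule DERIV_real_sqrt) simp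
lemma a3: "x < 1 \<Longrightarrow> ((\<lambda>s. sqrt (1 - s)) has_real_derivative (inverse (sqrt (1 - x)) / 2 * (0 - 1))) (at x)"
      by (rule DERIV_chain2[OF a2 a1])
lemma a4: "x < 1 \<Longrightarrow> ((\<lambda>s. - 2 * sqrt (1 - s)) has_real_derivative (- 2 * (inverse (sqrt (1 - x)) / 2 * (0 - 1)))) (at x)"
      by (rule DERIV_cmult[OF a3])
lemma a5: "- 2 * (inverse (sqrt (1 - x)) / 2 * (0 - 1)) = hh x" by (simp add: hh_def inverse_eq_divide)
lemma a6: "x < 1 \<Longrightarrow> ((\<lambda>s. - 2 * sqrt (1 - s)) has_vector_derivative hh x) (at x)"
  using a4[of x] unfolding a5 has_real_derivative_iff_has_vector_derivative .
lemma hh_int: "(hh has_integral 2) {0..1}"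
proof -
  have cG: "continuous_on {0..1} (\<lambda>s::real. - 2 * sqrt (1 - s))" by (intro continuous_intros)
  have e: "(\<lambda>s::real. - 2 * sqrt (1 - s)) 1 - (\<lambda>s. - 2 * sqrt (1 - s)) 0 = 2" by simp
  have "(hh has_integral ((\<lambda>s. - 2 * sqrt (1 - s)) 1 - (\<lambda>s. - 2 * sqrt (1 - s)) 0)) {0..1}"
  proof (rule fundamental_theorem_of_calculus_interior[OF _ cG])
    fix x :: real assume "x \<in> {0<..<1}"
    then have "x < 1" by simp
    then show "((\<lambda>s. - 2 * sqrt (1 - s)) has_vector_derivative hh x) (at x)" by (rule a6)
  qed simp
  then show ?thesis unfolding e .
qed

lemma hh_integrable: "hh integrable_on {0..1}" using hh_int by blast

lemma int_half_open:
  fixes f :: "real \<Rightarrow> real"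
  shows "f integrable_on {0..<1} \<longleftrightarrow> f integrable_on {0..1}"
proof
  assume "f integrable_on {0..<1}"
  then show "f integrable_on {0..1}"
    by (rule integrable_spike_set) (auto intro: negligible_subset[of "{1}"])
next
  assume "f integrable_on {0..1}"
  then show "f integrable_on {0..<1}"
    by (rule integrable_spike_set) (auto intro: negligible_subset[of "{1}"])
qed

lemma Fd_cont_s:
  fixes p a c :: real
  assumes "p > 1"
  shows "continuous_on {0..} (Fd p a c)"
  unfolding Fd_def by (intro continuous_intros continuous_on_powr') (use assms in auto)

lemma FF_cont_s:
  fixes p a c :: real
  assumes "p > 1" "0 \<le> a" "0 \<le> c" "c \<le> 1"
  shows "continuous_on {0..<1} (FF p a c)"
proof -
  have c1: "continuous_on {0..<1} (Fd p a c)"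
    by (rule continuous_on_subset[OF Fd_cont_s[OF assms(1)]]) auto
  have "continuous_on {0..<1} (\<lambda>s. 1 / sqrt (Fd p a c s))"
    by (intro continuous_intros c1) (use Fd_pos assms in force)
  then show ?thesis by (simp add: FF_def[abs_def])
qed

lemma FF_integrable:
  fixes p a c :: real
  assumes "p > 1" "0 \<le> a" "0 \<le> c" "c \<le> 1"
  shows "FF p a c integrable_on {0..1}"
proof -
  have m: "FF p a c \<in> borel_measurable (lebesgue_on {0..<1})"
    by (rule continuous_imp_measurable_on_sets_lebesgue[OF FF_cont_s[OF assms]]) simp
  have hi: "hh integrable_on {0..<1}" using hh_integrable int_half_open by blast
  have "FF p a c integrable_on {0..<1}"
  proof (rule measurable_bounded_by_integrable_imp_integrable_real[OF m hi])
    fix s assume "s \<in> {0..<1::real}"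
    then show "\<bar>FF p a c s\<bar> \<le> hh s" using FF_bound[of p a c s] assms by auto
  qed simp
  then show ?thesis using int_half_open by blast
qed

definition II :: "real \<Rightarrow> real \<Rightarrow> real \<Rightarrow> real" where
  "II p a c = integral {0..1} (FF p a c)"

lemma II_cont:
  fixes p :: real
  assumes "p > 1"
  shows "continuous_on ({0..} \<times> {0..1}) (\<lambda>x. II p (fst x) (snd x))"
  unfolding II_def
proof (rule param_cont[OF _ hh_integrable])
  fix x :: "real \<times> real" assume "x \<in> {0..} \<times> {0..1}"
  then show "FF p (fst x) (snd x) integrable_on {0..1}"
    using FF_integrable[of p "fst x" "snd x"] assms by auto
next
  fix x :: "real \<times> real" and s :: real assume "x \<in> {0..} \<times> {0..1}" "s \<in> {0..<1}"
  then show "\<bar>FF p (fst x) (snd x) s\<bar> \<le> hh s"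
    using FF_bound[of p "fst x" "snd x" s] assms by auto
next
  fix s :: real assume s: "s \<in> {0..<1}"
  show "continuous_on ({0..} \<times> {0..1}) (\<lambda>x. FF p (fst x) (snd x) s)"
  proof -
    have c1: "continuous_on ({0..} \<times> {0..1}) (\<lambda>x. Fd p (fst x) (snd x) s)"
      unfolding Fd_def by (intro continuous_intros continuous_on_powr') (use assms s in auto)
    have "continuous_on ({0..} \<times> {0..1}) (\<lambda>x. 1 / sqrt (Fd p (fst x) (snd x) s))"
      by (intro continuous_intros c1) (use Fd_pos assms s in force)
    then show ?thesis by (simp add: FF_def)
  qed
qed

lemma int_pos:
  fixes g :: "real \<Rightarrow> real"
  assumes "g integrable_on {0..1}" "\<And>s. s \<in> {0..1} \<Longrightarrow> g s \<ge> 0"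
    "continuous_on {0..1/2::real} g" "\<And>s. s \<in> {0..1/2::real} \<Longrightarrow> g s > 0"
  shows "integral {0..1} g > 0"
proof -
  obtain s0 where s0: "s0 \<in> {0..1/2::real}" "\<And>s. s \<in> {0..1/2::real} \<Longrightarrow> g s0 \<le> g s"
    using continuous_attains_inf[OF compact_Icc _ assms(3)] by auto
  have i1: "g integrable_on {0..1/2::real}" by (rule integrable_subinterval_real[OF assms(1)]) auto
  have i2: "g integrable_on {1/2::real..1}" by (rule integrable_subinterval_real[OF assms(1)]) auto
  have "integral {0..1/2::real} (\<lambda>s. g s0) \<le> integral {0..1/2::real} g"
    by (rule integral_le[OF _ i1]) (use s0 in auto)
  then have A: "g s0 / 2 \<le> integral {0..1/2::real} g" by simp
  have B: "0 \<le> integral {1/2::real..1} g" by (rule integral_nonneg[OF i2]) (use assms(2) in auto)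
  have "integral {0..1/2::real} g + integral {1/2::real..1} g = integral {0..1} g"
    by (rule Henstock_Kurzweil_Integration.integral_combine[OF _ _ assms(1)]) auto
  moreover have "g s0 > 0" using assms(4) s0 by auto
  ultimately show ?thesis using A B by linarith
qed

lemma FF_nonneg:
  fixes p a c s :: real
  assumes "p > 1" "0 \<le> a" "0 \<le> c" "c \<le> 1" "0 \<le> s" "s \<le> 1"
  shows "FF p a c s \<ge> 0"
proof -
  have "a * c powr (p+1) \<ge> 0" using assms by simp
  then have "(1 - s) * (1 + a * c powr (p+1)) \<ge> 0" using assms by simp
  then have "Fd p a c s \<ge> 0" using Fd_lb[OF assms] by linarith
  then show ?thesis by (simp add: FF_def)
qed

lemma II_pos:
  fixes p a c :: real
  assumes "p > 1" "0 \<le> a" "0 \<le> c" "c \<le> 1"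
  shows "II p a c > 0"
  unfolding II_def
proof (rule int_pos[OF FF_integrable[OF assms]])
  show "\<And>s. s \<in> {0..1} \<Longrightarrow> 0 \<le> FF p a c s" using FF_nonneg assms by auto
  show "continuous_on {0..1/2} (FF p a c)"
    by (rule continuous_on_subset[OF FF_cont_s[OF assms]]) auto
  show "\<And>s. s \<in> {0..1/2} \<Longrightarrow> 0 < FF p a c s" using FF_bound assms by auto
qed

lemma inv_sqrt_less: "0 < x \<Longrightarrow> x < y \<Longrightarrow> 1 / sqrt y < 1 / sqrt (x::real)"
  by (simp add: divide_strict_left_mono)

lemma inv_sqrt_le: "0 < x \<Longrightarrow> x \<le> y \<Longrightarrow> 1 / sqrt y \<le> 1 / sqrt (x::real)"
  by (simp add: divide_left_mono)

lemma Fd_mono_a: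
  fixes p a1 a2 c s :: real
  assumes "p > 1" "a1 \<le> a2" "0 \<le> c" "0 \<le> s" "s \<le> 1"
  shows "Fd p a1 c s \<le> Fd p a2 c s"
proof -
  have "c powr (p+1) * (1 - s powr (p+1)) \<ge> 0" using spow_le[of p s] assms by simp
  then have "a1 * (c powr (p+1) * (1 - s powr (p+1))) \<le> a2 * (c powr (p+1) * (1 - s powr (p+1)))"
    using assms by (intro mult_right_mono) auto
  then show ?thesis unfolding Fd_def by (simp add: mult.assoc)
qed

lemma Fd_smono_a:
  fixes p a1 a2 c s :: real
  assumes "p > 1" "a1 < a2" "0 < c" "0 \<le> s" "s < 1"
  shows "Fd p a1 c s < Fd p a2 c s"
proof -
  have "s powr (p+1) < 1" using spow_le[of p s] assms by simp
  then have "c powr (p+1) * (1 - s powr (p+1)) > 0" using assms by simp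
  then have "a1 * (c powr (p+1) * (1 - s powr (p+1))) < a2 * (c powr (p+1) * (1 - s powr (p+1)))"
    using assms by (intro mult_strict_right_mono) auto
  then show ?thesis unfolding Fd_def by (simp add: mult.assoc)
qed

lemma II_strict:
  fixes p a1 a2 c :: real
  assumes "p > 1" "0 \<le> a1" "a1 < a2" "0 < c" "c \<le> 1"
  shows "II p a2 c < II p a1 c"
proof -
  have i1: "FF p a1 c integrable_on {0..1}" using FF_integrable assms by auto
  have i2: "FF p a2 c integrable_on {0..1}" using FF_integrable assms by auto
  have "integral {0..1} (\<lambda>s. FF p a1 c s - FF p a2 c s) > 0"
  proof (rule int_pos[OF integrable_diff[OF i1 i2]])
    fix s :: real assume s: "s \<in> {0..1}"
    show "0 \<le> FF p a1 c s - FF p a2 c s"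
    proof (cases "s = 1")
      case True then show ?thesis by (simp add: FF_def Fd_def)
    next
      case False
      then have "Fd p a1 c s > 0" using Fd_pos[of p a1 c s] assms s by auto
      then show ?thesis using inv_sqrt_le[of "Fd p a1 c s" "Fd p a2 c s"] Fd_mono_a[of p a1 a2 c s] assms s
        by (auto simp: FF_def)
    qed
  next
    have "continuous_on {0..1/2} (\<lambda>s. FF p a1 c s - FF p a2 c s)"
      by (intro continuous_intros continuous_on_subset[OF FF_cont_s]) (use assms in auto)
    then show "continuous_on {0..1/2} (\<lambda>s. FF p a1 c s - FF p a2 c s)" .
  next
    fix s :: real assume s: "s \<in> {0..1/2}"
    have "Fd p a1 c s > 0" using Fd_pos[of p a1 c s] assms s by auto
    then show "0 < FF p a1 c s - FF p a2 c s"
      using inv_sqrt_less[of "Fd p a1 c s" "Fd p a2 c s"] Fd_smono_a[of p a1 a2 c s] assms s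
      by (auto simp: FF_def)
  qed
  then show ?thesis using integral_diff[OF i1 i2] by (simp add: II_def)
qed

lemma II_bound:
  fixes p a c :: real
  assumes "p > 1" "0 \<le> a" "0 \<le> c" "c \<le> 1"
  shows "II p a c \<le> 2 * (1 / sqrt (1 + a * c powr (p+1)))"
proof -
  define K where "K = 1 / sqrt (1 + a * c powr (p+1))"
  have K: "K \<ge> 0" using assms by (simp add: K_def)
  have e: "II p a c = integral {0..1} (\<lambda>s. if s = 1 then 0 else FF p a c s)"
    unfolding II_def by (rule integral_spike[of "{1}"]) auto
  have hi: "((\<lambda>s. hh s * K) has_integral (2 * K)) {0..1}"
    by (rule has_integral_mult_left[OF hh_int])
  have fi: "(\<lambda>s. if s = 1 then 0 else FF p a c s) integrable_on {0..1}"
    by (rule integrable_spike[OF FF_integrable[OF assms], of "{1}"]) auto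
  have "integral {0..1} (\<lambda>s. if s = 1 then 0 else FF p a c s) \<le> integral {0..1} (\<lambda>s. hh s * K)"
  proof (rule integral_le[OF fi])
    show "(\<lambda>s. hh s * K) integrable_on {0..1}" using hi by blast
    fix s :: real assume s: "s \<in> {0..1}"
    show "(if s = 1 then 0 else FF p a c s) \<le> hh s * K"
    proof (cases "s = 1")
      case True then show ?thesis by (simp add: hh_def)
    next
      case False
      then show ?thesis using FF_bound(2)[of p a c s] assms s by (simp add: K_def)
    qed
  qed
  also have "\<dots> = 2 * K" using hi by (rule integral_unique)
  finally show ?thesis using e by (simp add: K_def)
qed

lemma II_c0:
  fixes p a :: real
  assumes "p > 1"
  shows "II p a 0 = 1"
proof -
  have "FF p a 0 = (\<lambda>s. 1)" using assms by (simp add: FF_def Fd_def fun_eq_iff)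
  then show ?thesis by (simp add: II_def)
qed

lemma II_a0:
  fixes p c :: real
  assumes "p > 1" "0 < c" "c \<le> 1"
  shows "II p 0 c = arcsin c / c"
proof -
  define G where "G s = arcsin (c * s) / c" for s
  have FF0: "FF p 0 c s = 1 / sqrt (1 - (c * s)^2)" for s by (simp add: FF_def Fd_def power_mult_distrib)
  have cG: "continuous_on {0..1} (\<lambda>s. arcsin (c * s) / c)"
  proof (intro continuous_intros)
    show "\<forall>x\<in>{0..1}. - 1 \<le> c * x \<and> c * x \<le> 1"
      using assms by (auto intro: mult_le_one order_trans[of _ 0])
  qed (use assms in auto)
  have dG: "((\<lambda>s. arcsin (c * s) / c) has_vector_derivative FF p 0 c x) (at x)" if x: "x \<in> {0<..<1}" for x
  proof -
    have cx: "c * x < 1" using x assms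
      by (metis greaterThanLessThan_iff less_le_trans mult_less_cancel_left_pos mult.right_neutral mult_le_cancel_right1 not_le)
    have cx0: "- 1 < c * x" using x assms by (simp add: order_less_le_trans[of _ 0])
    have d1: "((\<lambda>s. c * s) has_real_derivative (c * 1)) (at x)" by (rule DERIV_cmult[OF DERIV_ident])
    have d2: "(arcsin has_real_derivative inverse (sqrt (1 - (c * x)^2))) (at (c * x))"
      by (rule DERIV_arcsin[OF cx0 cx])
    have "((\<lambda>s. arcsin (c * s)) has_real_derivative (inverse (sqrt (1 - (c * x)^2)) * (c * 1))) (at x)"
      by (rule DERIV_chain2[OF d2 d1])
    then have "((\<lambda>s. arcsin (c * s) / c) has_real_derivative (inverse (sqrt (1 - (c * x)^2)) * (c * 1)) / c) (at x)"
      by (rule DERIV_cdivide)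
    moreover have "(inverse (sqrt (1 - (c * x)^2)) * (c * 1)) / c = FF p 0 c x"
      using assms unfolding FF0 by (simp add: inverse_eq_divide)
    ultimately have "((\<lambda>s. arcsin (c * s) / c) has_real_derivative FF p 0 c x) (at x)" by simp
    then show ?thesis unfolding has_real_derivative_iff_has_vector_derivative .
  qed
  have "(FF p 0 c has_integral ((\<lambda>s. arcsin (c * s) / c) 1 - (\<lambda>s. arcsin (c * s) / c) 0)) {0..1}"
  proof (rule fundamental_theorem_of_calculus_interior[OF _ cG])
    fix x :: real assume "x \<in> {0<..<1}"
    then show "((\<lambda>s. arcsin (c * s) / c) has_vector_derivative FF p 0 c x) (at x)" by (rule dG)
  qed simp
  then have "(FF p 0 c has_integral (arcsin c / c)) {0..1}" by simp
  then show ?thesis unfolding II_def by (rule integral_unique)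
qed

definition FA :: "real \<Rightarrow> real \<Rightarrow> real \<Rightarrow> real \<Rightarrow> real" where
  "FA p a c s = - (c powr (p+1) * (1 - s powr (p+1))) / (2 * (Fd p a c s * sqrt (Fd p a c s)))"
definition FC :: "real \<Rightarrow> real \<Rightarrow> real \<Rightarrow> real \<Rightarrow> real" where
  "FC p a c s = - (a * ((p+1) * c powr p) * (1 - s powr (p+1)) - 2 * c * s^2) / (2 * (Fd p a c s * sqrt (Fd p a c s)))"

lemma d_invsqrt:
  fixes u :: "real \<Rightarrow> real"
  assumes d: "(u has_real_derivative u') (at x within S)" and pos: "u x > 0"
  shows "((\<lambda>x. 1 / sqrt (u x)) has_real_derivative (- u' / (2 * (u x * sqrt (u x))))) (at x within S)"
proof -
  have d1: "((\<lambda>x. sqrt (u x)) has_real_derivative (inverse (sqrt (u x)) / 2 * u')) (at x within S)"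
    by (rule DERIV_chain'[OF d DERIV_real_sqrt[OF pos]])
  have d2: "((\<lambda>x. inverse (sqrt (u x))) has_real_derivative (- ((inverse (sqrt (u x)) / 2 * u') * inverse (sqrt (u x) ^ Suc (Suc 0))))) (at x within S)"
    by (rule DERIV_inverse_fun[OF d1]) (use pos in simp)
  have s2: "sqrt (u x) ^ Suc (Suc 0) = u x" using pos by simp
  have eq: "- ((inverse (sqrt (u x)) / 2 * u') * inverse (sqrt (u x) ^ Suc (Suc 0))) = - u' / (2 * (u x * sqrt (u x)))"
    unfolding s2 using pos by (simp add: field_simps inverse_eq_divide)
  have fe: "(\<lambda>x. 1 / sqrt (u x)) = (\<lambda>x. inverse (sqrt (u x)))" by (simp add: inverse_eq_divide)
  show ?thesis unfolding fe using d2 unfolding eq .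
qed

lemma Fd_pos2:
  fixes p a c s :: real
  assumes "p > 1" "0 \<le> a" "0 \<le> c" "c < 1" "0 \<le> s" "s \<le> 1"
  shows "Fd p a c s > 0"
proof -
  have "Fd p a c s \<ge> 1 - c^2" using Fd_lb2[of p a c c s] assms by auto
  moreover have "c^2 < 1" using assms by (simp add: power_less_one_iff abs_less_iff)
  ultimately show ?thesis by linarith
qed

lemma Fd_deriv_a:
  fixes p a c s :: real
  shows "((\<lambda>a. Fd p a c s) has_real_derivative (c powr (p+1) * (1 - s powr (p+1)))) (at a within U)"
  unfolding Fd_def by (rule derivative_eq_intros refl)+ simp

lemma Fd_deriv_c:
  fixes p a c s :: real
  assumes "c > 0"
  shows "((\<lambda>c. Fd p a c s) has_real_derivative (a * ((p+1) * c powr p) * (1 - s powr (p+1)) - 2 * c * s^2)) (at c within U)"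
proof -
  have P: "((\<lambda>c. c powr (p+1)) has_real_derivative (p+1) * c powr p) (at c within U)"
    using has_real_derivative_powr[of c "p+1"] assms by (simp add: has_field_derivative_at_within)
  show ?thesis
    unfolding Fd_def by (rule derivative_eq_intros refl P)+ (simp add: algebra_simps power2_eq_square)
qed

lemma FA_deriv:
  fixes p a c s :: real
  assumes "p > 1" "0 \<le> a" "0 \<le> c" "c < 1" "0 \<le> s" "s \<le> 1"
  shows "((\<lambda>a. FF p a c s) has_real_derivative FA p a c s) (at a within U)"
  unfolding FF_def FA_def by (rule d_invsqrt[OF Fd_deriv_a Fd_pos2[OF assms]])

lemma FC_deriv:
  fixes p a c s :: real
  assumes "p > 1" "0 \<le> a" "0 < c" "c < 1" "0 \<le> s" "s \<le> 1"
  shows "((\<lambda>c. FF p a c s) has_real_derivative FC p a c s) (at c within U)"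
  unfolding FF_def FC_def by (rule d_invsqrt[OF Fd_deriv_c Fd_pos2]) (use assms in auto)

lemma Fd_pos_gen:
  fixes p :: real
  assumes "p > 1" "\<And>x. x \<in> T \<Longrightarrow> fa x \<ge> 0 \<and> 0 \<le> fc x \<and> fc x < 1 \<and> 0 \<le> fs x \<and> fs x \<le> 1"
  shows "\<And>x. x \<in> T \<Longrightarrow> 1 - (fc x)^2 * (fs x)^2 + fa x * fc x powr (p+1) * (1 - fs x powr (p+1)) > 0"
  using Fd_pos2[of p] assms unfolding Fd_def by blast

lemma gen_cont:
  fixes fa fc fs u v w :: "'a::topological_space \<Rightarrow> real"
  assumes c: "continuous_on T fa" "continuous_on T fc" "continuous_on T fs"
     "continuous_on T u" "continuous_on T v" "continuous_on T w"
  and pos: "\<And>x. x \<in> T \<Longrightarrow> 1 - (fc x)^2 * (fs x)^2 + fa x * u x * (1 - v x) > 0"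
  shows "continuous_on T (\<lambda>x. - (u x * (1 - v x)) / (2 * ((1 - (fc x)^2 * (fs x)^2 + fa x * u x * (1 - v x)) * sqrt (1 - (fc x)^2 * (fs x)^2 + fa x * u x * (1 - v x)))))"
    "continuous_on T (\<lambda>x. - (fa x * ((p+1) * w x) * (1 - v x) - 2 * fc x * (fs x)^2) / (2 * ((1 - (fc x)^2 * (fs x)^2 + fa x * u x * (1 - v x)) * sqrt (1 - (fc x)^2 * (fs x)^2 + fa x * u x * (1 - v x)))))"
    "continuous_on T (\<lambda>x. 1 / sqrt (1 - (fc x)^2 * (fs x)^2 + fa x * u x * (1 - v x)))"
proof -
  have ne: "\<And>x. x \<in> T \<Longrightarrow> 2 * ((1 - (fc x)^2 * (fs x)^2 + fa x * u x * (1 - v x)) * sqrt (1 - (fc x)^2 * (fs x)^2 + fa x * u x * (1 - v x))) \<noteq> 0"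
    using pos by (metis mult_eq_0_iff real_sqrt_eq_zero_cancel_iff zero_neq_numeral less_irrefl)
  have ne2: "\<And>x. x \<in> T \<Longrightarrow> sqrt (1 - (fc x)^2 * (fs x)^2 + fa x * u x * (1 - v x)) \<noteq> 0"
    using pos by (metis real_sqrt_eq_zero_cancel_iff less_irrefl)
  show "continuous_on T (\<lambda>x. - (u x * (1 - v x)) / (2 * ((1 - (fc x)^2 * (fs x)^2 + fa x * u x * (1 - v x)) * sqrt (1 - (fc x)^2 * (fs x)^2 + fa x * u x * (1 - v x)))))"
    by (intro continuous_intros c) (use ne in auto)
  show "continuous_on T (\<lambda>x. - (fa x * ((p+1) * w x) * (1 - v x) - 2 * fc x * (fs x)^2) / (2 * ((1 - (fc x)^2 * (fs x)^2 + fa x * u x * (1 - v x)) * sqrt (1 - (fc x)^2 * (fs x)^2 + fa x * u x * (1 - v x)))))"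
    by (intro continuous_intros c) (use ne in auto)
  show "continuous_on T (\<lambda>x. 1 / sqrt (1 - (fc x)^2 * (fs x)^2 + fa x * u x * (1 - v x)))"
    by (intro continuous_intros c) (use ne2 in auto)
qed

lemma FA_cont3:
  fixes p :: real and fa fc fs :: "'a::topological_space \<Rightarrow> real"
  assumes p: "p > 1" and c: "continuous_on T fa" "continuous_on T fc" "continuous_on T fs"
    and r: "\<And>x. x \<in> T \<Longrightarrow> fa x \<ge> 0 \<and> 0 \<le> fc x \<and> fc x < 1 \<and> 0 \<le> fs x \<and> fs x \<le> 1"
  shows "continuous_on T (\<lambda>x. FA p (fa x) (fc x) (fs x))"
    "continuous_on T (\<lambda>x. FC p (fa x) (fc x) (fs x))"
proof -
  have pos: "0 < 1 - (fc x)^2 * (fs x)^2 + fa x * fc x powr (p+1) * (1 - fs x powr (p+1))" if "x \<in> T" for x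
    using Fd_pos2[of p "fa x" "fc x" "fs x"] r[OF that] p unfolding Fd_def by auto
  have u: "continuous_on T (\<lambda>x. fc x powr (p+1))"
    by (rule continuous_on_powr'[OF c(2) continuous_on_const]) (use r p in auto)
  have v: "continuous_on T (\<lambda>x. fs x powr (p+1))"
    by (rule continuous_on_powr'[OF c(3) continuous_on_const]) (use r p in auto)
  have w: "continuous_on T (\<lambda>x. fc x powr p)"
    by (rule continuous_on_powr'[OF c(2) continuous_on_const]) (use r p in auto)
  show "continuous_on T (\<lambda>x. FA p (fa x) (fc x) (fs x))"
    unfolding FA_def Fd_def by (rule gen_cont(1)[OF c u v w pos])
  show "continuous_on T (\<lambda>x. FC p (fa x) (fc x) (fs x))"
    unfolding FC_def Fd_def by (rule gen_cont(2)[OF c u v w pos])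
qed

lemma param_cont_local:
  fixes f :: "'a::metric_space \<Rightarrow> real \<Rightarrow> real"
  assumes int: "\<And>x. x \<in> X \<Longrightarrow> f x integrable_on {0..1}"
  and loc: "\<And>x0. x0 \<in> X \<Longrightarrow> \<exists>Nb B. open Nb \<and> x0 \<in> Nb \<and> (\<forall>x\<in>X \<inter> Nb. \<forall>s\<in>{0..<1}. \<bar>f x s\<bar> \<le> B)"
  and ct: "\<And>s. s \<in> {0..<1} \<Longrightarrow> continuous_on X (\<lambda>x. f x s)"
  shows "continuous_on X (\<lambda>x. integral {0..1} (f x))"
  unfolding continuous_on_eq_continuous_within
proof
  fix x0 assume x0: "x0 \<in> X"
  obtain Nb B where Nb: "open Nb" "x0 \<in> Nb" and B: "\<forall>x\<in>X \<inter> Nb. \<forall>s\<in>{0..<1}. \<bar>f x s\<bar> \<le> B"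
    using loc[OF x0] by blast
  have "continuous_on (X \<inter> Nb) (\<lambda>x. integral {0..1} (f x))"
  proof (rule param_cont[where h = "\<lambda>_. B"])
    show "\<And>x. x \<in> X \<inter> Nb \<Longrightarrow> f x integrable_on {0..1}" using int by auto
    show "(\<lambda>_::real. B) integrable_on {0..1}" using integrable_const[of B "0::real" 1] by simp
    show "\<And>x s. x \<in> X \<inter> Nb \<Longrightarrow> s \<in> {0..<1} \<Longrightarrow> \<bar>f x s\<bar> \<le> B" using B by auto
    show "\<And>s. s \<in> {0..<1} \<Longrightarrow> continuous_on (X \<inter> Nb) (\<lambda>x. f x s)"
      using ct continuous_on_subset by blast
  qed
  then have "continuous (at x0 within X \<inter> Nb) (\<lambda>x. integral {0..1} (f x))"
    using x0 Nb by (simp add: continuous_on_eq_continuous_within)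
  moreover have "at x0 within X \<inter> Nb = at x0 within X"
    by (rule at_within_nhd[OF Nb(2) Nb(1)]) auto
  ultimately show "continuous (at x0 within X) (\<lambda>x. integral {0..1} (f x))" by simp
qed

lemma frac_bd:
  fixes N K D m :: real
  assumes "\<bar>N\<bar> \<le> K" "m \<le> D" "0 < m"
  shows "\<bar>N / (2 * (D * sqrt D))\<bar> \<le> K / (2 * (m * sqrt m))"
proof -
  have D: "0 < D" using assms by linarith
  have den: "2 * (m * sqrt m) \<le> 2 * (D * sqrt D)"
    using assms by (intro mult_left_mono mult_mono) auto
  have dp: "0 < 2 * (m * sqrt m)" using assms by simp
  have "\<bar>N / (2 * (D * sqrt D))\<bar> = \<bar>N\<bar> / (2 * (D * sqrt D))" using D by (simp add: abs_divide)
  also have "\<dots> \<le> K / (2 * (D * sqrt D))" using assms D by (intro divide_right_mono) auto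
  also have "\<dots> \<le> K / (2 * (m * sqrt m))"
    using assms den dp by (intro divide_left_mono) (auto intro: order_trans[OF abs_ge_zero])
  finally show ?thesis .
qed

lemma numA_bd:
  fixes p c s :: real
  assumes "p > 1" "0 \<le> c" "c \<le> 1" "0 \<le> s" "s \<le> 1"
  shows "\<bar>- (c powr (p+1) * (1 - s powr (p+1)))\<bar> \<le> 1"
proof -
  have c1: "c powr (p+1) \<le> 1" using assms by (intro powr_le1) auto
  have e1: "1 - s powr (p+1) \<le> 1" "0 \<le> 1 - s powr (p+1)" using spow_le[of p s] assms by auto
  have "c powr (p+1) * (1 - s powr (p+1)) \<le> 1" using c1 e1 by (intro mult_le_one) auto
  moreover have "0 \<le> c powr (p+1) * (1 - s powr (p+1))" using e1 by simp
  ultimately show ?thesis by simp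
qed

lemma numC_bd:
  fixes p a A c s :: real
  assumes "p > 1" "0 \<le> a" "a \<le> A" "0 \<le> c" "c \<le> 1" "0 \<le> s" "s \<le> 1"
  shows "\<bar>- (a * ((p+1) * c powr p) * (1 - s powr (p+1)) - 2 * c * s^2)\<bar> \<le> A * (p+1) + 2"
proof -
  have c1: "c powr p \<le> 1" using assms by (intro powr_le1) auto
  have e1: "1 - s powr (p+1) \<le> 1" "0 \<le> 1 - s powr (p+1)" using spow_le[of p s] assms by auto
  have q: "c powr p * (1 - s powr (p+1)) \<le> 1" using c1 e1 by (intro mult_le_one) auto
  have q0: "0 \<le> c powr p * (1 - s powr (p+1))" using e1 by simp
  have "a * ((p+1) * (c powr p * (1 - s powr (p+1)))) \<le> A * ((p+1) * 1)"
    using assms q q0 by (intro mult_mono) auto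
  then have X: "a * ((p+1) * c powr p) * (1 - s powr (p+1)) \<le> A * (p+1)" by (simp add: mult.assoc)
  have X0: "0 \<le> a * ((p+1) * c powr p) * (1 - s powr (p+1))" using assms e1 by simp
  have "c * s^2 \<le> 1" using assms by (intro mult_le_one) (auto simp: power_le_one)
  then have Y: "2 * c * s^2 \<le> 2" by simp
  have Y0: "0 \<le> 2 * c * s^2" using assms by simp
  show ?thesis using X X0 Y Y0 by linarith
qed

definition IA :: "real \<Rightarrow> real \<Rightarrow> real \<Rightarrow> real" where
  "IA p a c = integral {0..1} (FA p a c)"
definition IC :: "real \<Rightarrow> real \<Rightarrow> real \<Rightarrow> real" where
  "IC p a c = integral {0..1} (FC p a c)"

lemma local_box:
  fixes x0 :: "real \<times> real"
  assumes "snd x0 < 1"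
  shows "\<exists>Nb. open Nb \<and> x0 \<in> Nb \<and> (\<forall>x\<in>Nb. fst x \<le> fst x0 + 1 \<and> snd x \<le> (1 + snd x0) / 2)"
proof (intro exI conjI)
  show "open ({x. fst x < fst x0 + 1} \<inter> {x. snd x < (1 + snd x0) / 2})"
    by (intro open_Int open_Collect_less continuous_intros)
  show "x0 \<in> {x. fst x < fst x0 + 1} \<inter> {x. snd x < (1 + snd x0) / 2}" using assms by auto
qed auto

lemma IA_IC_cont:
  fixes p :: real
  assumes p: "p > 1"
  shows "continuous_on ({0..} \<times> {0..<1}) (\<lambda>x. IA p (fst x) (snd x))"
    "continuous_on ({0..} \<times> {0..<1}) (\<lambda>x. IC p (fst x) (snd x))"
proof -
  let ?X = "{0..} \<times> {0..<1::real}"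
  have cf: "continuous_on ?X fst" using continuous_on_fst[OF continuous_on_id] by simp
  have cs: "continuous_on ?X snd" using continuous_on_snd[OF continuous_on_id] by simp
  have loc: "\<exists>Nb B. open Nb \<and> x0 \<in> Nb \<and> (\<forall>x\<in>?X \<inter> Nb. \<forall>s\<in>{0..<1}. \<bar>FA p (fst x) (snd x) s\<bar> \<le> B \<and> \<bar>FC p (fst x) (snd x) s\<bar> \<le> B)"
    if x0: "x0 \<in> ?X" for x0
  proof -
    obtain Nb where Nb: "open Nb" "x0 \<in> Nb" "\<forall>x\<in>Nb. fst x \<le> fst x0 + 1 \<and> snd x \<le> (1 + snd x0) / 2"
      using local_box[of x0] x0 by auto
    define b where "b = (1 + snd x0) / 2"
    define m where "m = 1 - b^2"
    have b: "0 \<le> b" "b < 1" using x0 by (auto simp: b_def)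
    have m: "0 < m" using b by (simp add: m_def power_less_one_iff abs_less_iff)
    define B where "B = max (1 / (2 * (m * sqrt m))) (((fst x0 + 1) * (p + 1) + 2) / (2 * (m * sqrt m)))"
    have "\<forall>x\<in>?X \<inter> Nb. \<forall>s\<in>{0..<1}. \<bar>FA p (fst x) (snd x) s\<bar> \<le> B \<and> \<bar>FC p (fst x) (snd x) s\<bar> \<le> B"
    proof (intro ballI)
      fix x s assume x: "x \<in> ?X \<inter> Nb" and s: "s \<in> {0..<1::real}"
      have xb: "snd x \<le> b" "fst x \<le> fst x0 + 1" using Nb(3) x by (auto simp: b_def)
      have Dm: "m \<le> Fd p (fst x) (snd x) s"
        unfolding m_def using Fd_lb2[of p "fst x" "snd x" b s] x s xb p by auto
      have "\<bar>FA p (fst x) (snd x) s\<bar> \<le> 1 / (2 * (m * sqrt m))"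
        unfolding FA_def by (rule frac_bd[OF numA_bd Dm m]) (use p x s xb b in auto)
      moreover have "\<bar>FC p (fst x) (snd x) s\<bar> \<le> ((fst x0 + 1) * (p + 1) + 2) / (2 * (m * sqrt m))"
        unfolding FC_def by (rule frac_bd[OF numC_bd Dm m]) (use p x s xb b in auto)
      ultimately show "\<bar>FA p (fst x) (snd x) s\<bar> \<le> B \<and> \<bar>FC p (fst x) (snd x) s\<bar> \<le> B"
        unfolding B_def by auto
    qed
    then show ?thesis using Nb by blast
  qed
  have ctA: "continuous_on {0..1} (FA p a c)" "continuous_on {0..1} (FC p a c)"
    if "a \<ge> 0" "0 \<le> c" "c < 1" for a c
    using FA_cont3[of p "{0..1}" "\<lambda>_. a" "\<lambda>_. c" "\<lambda>s. s"] p that by (auto intro: continuous_intros)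
  show "continuous_on ?X (\<lambda>x. IA p (fst x) (snd x))"
    unfolding IA_def
  proof (rule param_cont_local)
    show "\<And>x. x \<in> ?X \<Longrightarrow> FA p (fst x) (snd x) integrable_on {0..1}"
      using ctA(1) by (auto intro!: integrable_continuous_real)
    show "\<And>x0. x0 \<in> ?X \<Longrightarrow> \<exists>Nb B. open Nb \<and> x0 \<in> Nb \<and> (\<forall>x\<in>?X \<inter> Nb. \<forall>s\<in>{0..<1}. \<bar>FA p (fst x) (snd x) s\<bar> \<le> B)"
      using loc by meson
    fix s :: real assume s: "s \<in> {0..<1}"
    show "continuous_on ?X (\<lambda>x. FA p (fst x) (snd x) s)"
      using FA_cont3[of p ?X fst snd "\<lambda>_. s"] p s cf cs by auto
  qed
  show "continuous_on ?X (\<lambda>x. IC p (fst x) (snd x))"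
    unfolding IC_def
  proof (rule param_cont_local)
    show "\<And>x. x \<in> ?X \<Longrightarrow> FC p (fst x) (snd x) integrable_on {0..1}"
      using ctA(2) by (auto intro!: integrable_continuous_real)
    show "\<And>x0. x0 \<in> ?X \<Longrightarrow> \<exists>Nb B. open Nb \<and> x0 \<in> Nb \<and> (\<forall>x\<in>?X \<inter> Nb. \<forall>s\<in>{0..<1}. \<bar>FC p (fst x) (snd x) s\<bar> \<le> B)"
      using loc by meson
    fix s :: real assume s: "s \<in> {0..<1}"
    show "continuous_on ?X (\<lambda>x. FC p (fst x) (snd x) s)"
      using FA_cont3[of p ?X fst snd "\<lambda>_. s"] p s cf cs by auto
  qed
qed

lemma IA_deriv:
  fixes p c a0 :: real
  assumes p: "p > 1" and c: "0 \<le> c" "c < 1" and a0: "a0 > 0"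
  shows "((\<lambda>a. II p a c) has_real_derivative IA p a0 c) (at a0)"
proof -
  have ce: "(\<lambda>(x, t). FA p x c t) = (\<lambda>z. FA p (fst z) c (snd z))" by (simp add: fun_eq_iff)
  have cf: "continuous_on ({0<..} \<times> {0..1}) fst" using continuous_on_fst[OF continuous_on_id] by simp
  have cs: "continuous_on ({0<..} \<times> {0..1}) snd" using continuous_on_snd[OF continuous_on_id] by simp
  have cont: "continuous_on ({0<..} \<times> {0..1::real}) (\<lambda>z. FA p (fst z) c (snd z))"
    by (rule FA_cont3(1)[OF p cf continuous_on_const cs]) (use c in auto)
  have "((\<lambda>a. integral (cbox 0 1) (FF p a c)) has_field_derivative integral (cbox 0 1) (FA p a0 c)) (at a0 within {0<..})"
  proof (rule leibniz_rule_field_derivative)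
    fix x t :: real assume x: "x \<in> {0<..}" and t: "t \<in> cbox 0 1"
    show "((\<lambda>x. FF p x c t) has_field_derivative FA p x c t) (at x within {0<..})"
      by (rule FA_deriv) (use p c x t in auto)
  next
    fix x :: real assume x: "x \<in> {0<..}"
    show "FF p x c integrable_on cbox 0 1"
      unfolding box_real by (rule FF_integrable) (use p c x in auto)
  next
    show "continuous_on ({0<..} \<times> cbox 0 1) (\<lambda>(x, t). FA p x c t)"
      unfolding ce box_real by (rule cont)
  next
    show "a0 \<in> {0<..}" using a0 by simp
    show "convex {0::real<..}" by simp
  qed
  moreover have "at a0 within {0<..} = at a0" by (rule at_within_open) (use a0 in auto)
  ultimately show ?thesis unfolding II_def IA_def box_real by simp
qed

lemma IC_deriv:
  fixes p a c0 :: real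
  assumes p: "p > 1" and a: "0 \<le> a" and c0: "0 < c0" "c0 < 1"
  shows "((\<lambda>c. II p a c) has_real_derivative IC p a c0) (at c0)"
proof -
  have ce: "(\<lambda>(x, t). FC p a x t) = (\<lambda>z. FC p a (fst z) (snd z))" by (simp add: fun_eq_iff)
  have cf: "continuous_on ({0<..<1} \<times> {0..1}) fst" using continuous_on_fst[OF continuous_on_id] by simp
  have cs: "continuous_on ({0<..<1} \<times> {0..1}) snd" using continuous_on_snd[OF continuous_on_id] by simp
  have cont: "continuous_on ({0<..<1} \<times> {0..1::real}) (\<lambda>z. FC p a (fst z) (snd z))"
    by (rule FA_cont3(2)[OF p continuous_on_const cf cs]) (use a in auto)
  have "((\<lambda>c. integral (cbox 0 1) (FF p a c)) has_field_derivative integral (cbox 0 1) (FC p a c0)) (at c0 within {0<..<1})"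
  proof (rule leibniz_rule_field_derivative)
    fix x t :: real assume x: "x \<in> {0<..<1}" and t: "t \<in> cbox 0 1"
    show "((\<lambda>x. FF p a x t) has_field_derivative FC p a x t) (at x within {0<..<1})"
      by (rule FC_deriv) (use p a x t in auto)
  next
    fix x :: real assume x: "x \<in> {0<..<1}"
    show "FF p a x integrable_on cbox 0 1"
      unfolding box_real by (rule FF_integrable) (use p a x in auto)
  next
    show "continuous_on ({0<..<1} \<times> cbox 0 1) (\<lambda>(x, t). FC p a x t)"
      unfolding ce box_real by (rule cont)
  next
    show "c0 \<in> {0<..<1}" using c0 by simp
    show "convex {0::real<..<1}" by (rule convex_real_interval(8))
  qed
  moreover have "at c0 within {0<..<1} = at c0" by (rule at_within_open) (use c0 in auto)
  ultimately show ?thesis unfolding II_def IC_def box_real by simp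
qed

lemma deriv_mult_zero:
  fixes u v :: "real \<Rightarrow> real"
  assumes u: "(u has_real_derivative u') (at x within S)" and u0: "u x = 0"
    and v: "continuous (at x within S) v"
  shows "((\<lambda>t. u t * v t) has_real_derivative u' * v x) (at x within S)"
proof -
  obtain g where g: "\<And>z. u z - u x = g z * (z - x)" "continuous (at x within S) g" "g x = u'"
    using u unfolding DERIV_caratheodory_within by blast
  show ?thesis unfolding DERIV_caratheodory_within
  proof (intro exI conjI allI)
    fix z
    have "u z = g z * (z - x)" using g(1)[of z] u0 by simp
    then show "u z * v z - u x * v x = (g z * v z) * (z - x)"
      using u0 by simp
    show "continuous (at x within S) (\<lambda>z. g z * v z)" using g(2) v by (intro continuous_mult)
    show "g x * v x = u' * v x" using g(3) by simp
  qed
qed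

definition aR :: "real \<Rightarrow> real \<Rightarrow> real \<Rightarrow> real" where
  "aR p lam R = 2 * R powr (p - 1) / (lam * (p + 1))"

lemma phi_eq:
  fixes p lam R \<theta> :: real
  assumes p: "p > 1" and lam: "lam > 0" and R: "R \<ge> 0" and c: "cos \<theta> > 0"
  shows "phi p lam R \<theta> = 2 * cos \<theta> * II p (aR p lam R) (cos \<theta>)"
proof -
  define c where "c = cos \<theta>"
  define A where "A = aR p lam R"
  have c0: "c > 0" using c by (simp add: c_def)
  have c1: "c \<le> 1" by (simp add: c_def)
  have A0: "A \<ge> 0" using p lam R by (simp add: A_def aR_def)
  have pw: "c powr (p+1) = c powr (p - 1) * c^2"
  proof -
    have "c powr (p+1) = c powr ((p - 1) + 2)" by (rule arg_cong[of _ _ "\<lambda>x. c powr x"]) simp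
    also have "\<dots> = c powr (p - 1) * c powr 2" by (rule powr_add)
    also have "c powr 2 = c^2" using c0 by (simp add: powr_realpow)
    finally show ?thesis .
  qed
  have pt: "1 / sqrt (1 / c^2 - s^2 + (2 * R powr (p - 1) * c powr (p - 1)) / (lam * (p + 1)) * (1 - s powr (p + 1)))
      = c * FF p A c s" for s
  proof -
    have cc: "c^2 \<noteq> 0" using c0 by simp
    have e1: "Fd p A c s / c^2 = 1 / c^2 - s^2 + A * c powr (p - 1) * (1 - s powr (p + 1))"
      unfolding Fd_def pw using cc by (simp add: add_divide_distrib diff_divide_distrib)
    have e2: "A * c powr (p - 1) * (1 - s powr (p + 1)) = (2 * R powr (p - 1) * c powr (p - 1)) / (lam * (p + 1)) * (1 - s powr (p + 1))"
      unfolding A_def aR_def by simp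
    have "1 / c^2 - s^2 + (2 * R powr (p - 1) * c powr (p - 1)) / (lam * (p + 1)) * (1 - s powr (p + 1))
        = Fd p A c s / c^2"
      unfolding e1 e2 ..
    then have "sqrt (1 / c^2 - s^2 + (2 * R powr (p - 1) * c powr (p - 1)) / (lam * (p + 1)) * (1 - s powr (p + 1)))
        = sqrt (Fd p A c s) / c"
      using c0 by (simp add: real_sqrt_divide)
    then show ?thesis using c0 by (simp add: FF_def)
  qed
  have "phi p lam R \<theta> = 2 * integral {0..1} (\<lambda>s. c * FF p A c s)"
    unfolding phi_def c_def[symmetric] using pt by simp
  also have "\<dots> = 2 * (c * II p A c)"
    unfolding II_def using integral_mult[OF FF_integrable[OF p A0 less_imp_le[OF c0] c1], of c] by simp
  finally show ?thesis by (simp add: c_def A_def)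
qed

lemma RA1: "p > (1::real) \<Longrightarrow> filterlim (\<lambda>R::real. R powr (p-1)) at_top at_top"
  by real_asymp
lemma RA2: "p > (1::real) \<Longrightarrow> ((\<lambda>R::real. R powr (p-1)) \<longlongrightarrow> 0) (at_right 0)"
  by real_asymp
lemma RA3: "p > (1::real) \<Longrightarrow> lam > 0 \<Longrightarrow> K > 0 \<Longrightarrow> ((\<lambda>R::real. 1 / sqrt (1 + 2 * R powr (p - 1) / (lam * (p + 1)) * K)) \<longlongrightarrow> 0) at_top"
  by real_asymp

lemma comp_cont2:
  fixes G :: "real \<Rightarrow> real \<Rightarrow> real" and g1 g2 :: "'a::topological_space \<Rightarrow> real"
  assumes "continuous_on T (\<lambda>x. G (fst x) (snd x))" "continuous_on S g1" "continuous_on S g2"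
    "\<And>z. z \<in> S \<Longrightarrow> (g1 z, g2 z) \<in> T"
  shows "continuous_on S (\<lambda>z. G (g1 z) (g2 z))"
proof -
  have "continuous_on S (\<lambda>z. (g1 z, g2 z))" using assms(2,3) by (intro continuous_intros)
  from continuous_on_compose2[OF assms(1) this] assms(4) show ?thesis by auto
qed

definition aR' :: "real \<Rightarrow> real \<Rightarrow> real \<Rightarrow> real" where
  "aR' p lam R = 2 * ((p - 1) * R powr (p - 1 - 1)) / (lam * (p + 1))"

lemma aR_facts:
  fixes p lam :: real
  assumes p: "p > 1" and lam: "lam > 0"
  shows "\<And>R. R > 0 \<Longrightarrow> aR p lam R > 0"
    "\<And>R. R \<ge> 0 \<Longrightarrow> aR p lam R \<ge> 0"
    "aR p lam 0 = 0"
    "continuous_on {0<..} (aR p lam)"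
    "continuous_on {0<..} (aR' p lam)"
    "\<And>R. R > 0 \<Longrightarrow> (aR p lam has_real_derivative aR' p lam R) (at R)"
    "\<And>R1 R2. 0 < R1 \<Longrightarrow> R1 < R2 \<Longrightarrow> aR p lam R1 < aR p lam R2"
    "(aR p lam \<longlongrightarrow> 0) (at_right 0)"
proof -
  show "\<And>R. R > 0 \<Longrightarrow> aR p lam R > 0" using p lam by (simp add: aR_def)
  show "\<And>R. R \<ge> 0 \<Longrightarrow> aR p lam R \<ge> 0" using p lam by (simp add: aR_def)
  show "aR p lam 0 = 0" by (simp add: aR_def)
  show "continuous_on {0<..} (aR p lam)"
    unfolding aR_def[abs_def] by (intro continuous_intros) (use p lam in auto)
  show "continuous_on {0<..} (aR' p lam)"
    unfolding aR'_def[abs_def] by (intro continuous_intros) (use p lam in auto)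
  show "(aR p lam has_real_derivative aR' p lam R) (at R)" if R: "R > 0" for R
  proof -
    have "((\<lambda>R. R powr (p - 1)) has_real_derivative (p - 1) * R powr (p - 1 - 1)) (at R)"
      by (rule has_real_derivative_powr[OF R])
    then have "((\<lambda>R. 2 * R powr (p - 1)) has_real_derivative 2 * ((p - 1) * R powr (p - 1 - 1))) (at R)"
      by (rule DERIV_cmult)
    then have "((\<lambda>R. 2 * R powr (p - 1) / (lam * (p + 1))) has_real_derivative 2 * ((p - 1) * R powr (p - 1 - 1)) / (lam * (p + 1))) (at R)"
      by (rule DERIV_cdivide)
    then show ?thesis unfolding aR_def[abs_def] aR'_def .
  qed
  show "aR p lam R1 < aR p lam R2" if "0 < R1" "R1 < R2" for R1 R2
  proof -
    have "R1 powr (p - 1) < R2 powr (p - 1)" using that p by (intro powr_less_mono2) auto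
    then show ?thesis using lam p by (simp add: aR_def divide_strict_right_mono)
  qed
  have "((\<lambda>R. 2 * R powr (p - 1) / (lam * (p + 1))) \<longlongrightarrow> 2 * 0 / (lam * (p + 1))) (at_right 0)"
    using p lam by (intro tendsto_intros RA2[OF p]) auto
  then show "(aR p lam \<longlongrightarrow> 0) (at_right 0)" unfolding aR_def[abs_def] by simp
qed

lemma cos_facts:
  fixes t :: real
  shows "t \<in> {0..<pi/2} \<Longrightarrow> 0 < cos t"
    "t \<in> {0..pi/2} \<Longrightarrow> 0 \<le> cos t"
    "t \<in> {0<..pi/2} \<Longrightarrow> cos t < 1"
proof -
  show "t \<in> {0..<pi/2} \<Longrightarrow> 0 < cos t" by (intro cos_gt_zero_pi) auto
  show "t \<in> {0..pi/2} \<Longrightarrow> 0 \<le> cos t" by (intro cos_ge_zero) auto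
  assume t: "t \<in> {0<..pi/2}"
  have "cos t < cos 0" by (rule cos_monotone_0_pi) (use t pi_gt_zero in auto)
  then show "cos t < 1" by simp
qed

lemma cfst: "continuous_on S fst" using continuous_on_fst[OF continuous_on_id] by simp
lemma csnd: "continuous_on S snd" using continuous_on_snd[OF continuous_on_id] by simp

lemma H_cont:
  fixes p lam :: real
  assumes p: "p > 1" and lam: "lam > 0"
  shows "continuous_on ({0<..} \<times> {0..pi/2}) (\<lambda>z. 2 * cos (snd z) * II p (aR p lam (fst z)) (cos (snd z)))"
proof -
  let ?S = "{0::real<..} \<times> {0..pi/2::real}"
  have g1: "continuous_on ?S (\<lambda>z. aR p lam (fst z))"
    by (rule continuous_on_compose2[OF aR_facts(4)[OF p lam] cfst]) auto
  have g2: "continuous_on ?S (\<lambda>z. cos (snd z))" by (rule continuous_on_cos) (rule csnd)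
  have "continuous_on ?S (\<lambda>z. II p (aR p lam (fst z)) (cos (snd z)))"
  proof (rule comp_cont2[OF II_cont[OF p] g1 g2])
    fix z assume z: "z \<in> ?S"
    show "(aR p lam (fst z), cos (snd z)) \<in> {0..} \<times> {0..1}"
      using z aR_facts(2)[OF p lam, of "fst z"] cos_facts(2)[of "snd z"] by auto
  qed
  then show ?thesis using g2 by (intro continuous_intros)
qed

lemma phi_H:
  fixes p lam R \<theta> :: real
  assumes p: "p > 1" and lam: "lam > 0" and R: "R > 0" and t: "\<theta> \<in> {0..pi/2}"
  shows "phi_ext p lam R \<theta> = 2 * cos \<theta> * II p (aR p lam R) (cos \<theta>)"
    "\<theta> < pi/2 \<Longrightarrow> phi p lam R \<theta> = 2 * cos \<theta> * II p (aR p lam R) (cos \<theta>)"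
proof -
  show "\<theta> < pi/2 \<Longrightarrow> phi p lam R \<theta> = 2 * cos \<theta> * II p (aR p lam R) (cos \<theta>)"
    using phi_eq[OF p lam less_imp_le[OF R], of \<theta>] cos_facts(1)[of \<theta>] t by auto
  show "phi_ext p lam R \<theta> = 2 * cos \<theta> * II p (aR p lam R) (cos \<theta>)"
  proof (cases "\<theta> = pi/2")
    case True
    then have "cos \<theta> = 0" by (simp only: True cos_pi_half)
    then have "2 * cos \<theta> * II p (aR p lam R) (cos \<theta>) = 0" by simp
    moreover have "phi_ext p lam R \<theta> = 0" using True by (simp add: phi_ext_def)
    ultimately show ?thesis by simp
  next
    case False
    then have "\<theta> < pi/2" using t by auto
    then show ?thesis using False phi_eq[OF p lam less_imp_le[OF R], of \<theta>] cos_facts(1)[of \<theta>] t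
      by (auto simp: phi_ext_def)
  qed
qed

definition DD :: "real \<Rightarrow> real \<Rightarrow> real \<times> real \<Rightarrow> real" where
  "DD p lam z = (2 * - sin (snd z)) * II p (aR p lam (fst z)) (cos (snd z))
     + (IC p (aR p lam (fst z)) (cos (snd z)) * - sin (snd z)) * (2 * cos (snd z))"

definition DRR :: "real \<Rightarrow> real \<Rightarrow> real \<times> real \<Rightarrow> real" where
  "DRR p lam z = 2 * cos (snd z) * (IA p (aR p lam (fst z)) (cos (snd z)) * aR' p lam (fst z))"

lemma DD_cont:
  fixes p lam :: real
  assumes p: "p > 1" and lam: "lam > 0"
  shows "continuous_on ({0<..} \<times> {0<..pi/2}) (DD p lam)"
proof -
  let ?S = "{0::real<..} \<times> {0<..pi/2::real}"
  have g1: "continuous_on ?S (\<lambda>z. aR p lam (fst z))"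
    by (rule continuous_on_compose2[OF aR_facts(4)[OF p lam] cfst]) auto
  have g2: "continuous_on ?S (\<lambda>z. cos (snd z))" by (rule continuous_on_cos) (rule csnd)
  have c1: "continuous_on ?S (\<lambda>z. II p (aR p lam (fst z)) (cos (snd z)))"
  proof (rule comp_cont2[OF II_cont[OF p] g1 g2])
    fix z assume z: "z \<in> ?S"
    show "(aR p lam (fst z), cos (snd z)) \<in> {0..} \<times> {0..1}"
      using z aR_facts(2)[OF p lam, of "fst z"] cos_facts(2)[of "snd z"] by auto
  qed
  have c2: "continuous_on ?S (\<lambda>z. IC p (aR p lam (fst z)) (cos (snd z)))"
  proof (rule comp_cont2[OF IA_IC_cont(2)[OF p] g1 g2])
    fix z assume z: "z \<in> ?S"
    show "(aR p lam (fst z), cos (snd z)) \<in> {0..} \<times> {0..<1}"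
      using z aR_facts(2)[OF p lam, of "fst z"] cos_facts(2,3)[of "snd z"] by auto
  qed
  show ?thesis unfolding DD_def[abs_def] using c1 c2 by (intro continuous_intros csnd)
qed

lemma DRR_cont:
  fixes p lam :: real
  assumes p: "p > 1" and lam: "lam > 0"
  shows "continuous_on ({0<..} \<times> {0<..<pi/2}) (DRR p lam)"
proof -
  let ?S = "{0::real<..} \<times> {0<..<pi/2::real}"
  have g1: "continuous_on ?S (\<lambda>z. aR p lam (fst z))"
    by (rule continuous_on_compose2[OF aR_facts(4)[OF p lam] cfst]) auto
  have g3: "continuous_on ?S (\<lambda>z. aR' p lam (fst z))"
    by (rule continuous_on_compose2[OF aR_facts(5)[OF p lam] cfst]) auto
  have g2: "continuous_on ?S (\<lambda>z. cos (snd z))" by (rule continuous_on_cos) (rule csnd)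
  have c2: "continuous_on ?S (\<lambda>z. IA p (aR p lam (fst z)) (cos (snd z)))"
  proof (rule comp_cont2[OF IA_IC_cont(1)[OF p] g1 g2])
    fix z assume z: "z \<in> ?S"
    show "(aR p lam (fst z), cos (snd z)) \<in> {0..} \<times> {0..<1}"
      using z aR_facts(2)[OF p lam, of "fst z"] cos_facts(2,3)[of "snd z"] by auto
  qed
  show ?thesis unfolding DRR_def[abs_def] using c2 g3 by (intro continuous_intros csnd)
qed

lemma H_deriv_theta:
  fixes p lam R \<theta> :: real
  assumes p: "p > 1" and lam: "lam > 0" and R: "R > 0" and t: "\<theta> \<in> {0<..<pi/2}"
  shows "((\<lambda>t. 2 * cos t * II p (aR p lam R) (cos t)) has_real_derivative DD p lam (R, \<theta>)) (at \<theta>)"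
proof -
  have c: "0 < cos \<theta>" "cos \<theta> < 1" using cos_facts(1,3)[of \<theta>] t by auto
  have d1: "((\<lambda>t. 2 * cos t) has_real_derivative 2 * - sin \<theta>) (at \<theta>)"
    by (rule DERIV_cmult[OF DERIV_cos])
  have d2: "((\<lambda>t. II p (aR p lam R) (cos t)) has_real_derivative IC p (aR p lam R) (cos \<theta>) * - sin \<theta>) (at \<theta>)"
    by (rule DERIV_chain'[OF DERIV_cos IC_deriv[OF p aR_facts(2)[OF p lam less_imp_le[OF R]] c]])
  have "((\<lambda>t. 2 * cos t * II p (aR p lam R) (cos t)) has_real_derivative
      2 * cos \<theta> * (IC p (aR p lam R) (cos \<theta>) * - sin \<theta>) + (2 * - sin \<theta>) * II p (aR p lam R) (cos \<theta>)) (at \<theta>)"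
    by (rule DERIV_mult'[OF d1 d2])
  moreover have "2 * cos \<theta> * (IC p (aR p lam R) (cos \<theta>) * - sin \<theta>) + (2 * - sin \<theta>) * II p (aR p lam R) (cos \<theta>)
     = DD p lam (R, \<theta>)" unfolding DD_def by simp
  ultimately show ?thesis by simp
qed

lemma H_deriv_R:
  fixes p lam R \<theta> :: real
  assumes p: "p > 1" and lam: "lam > 0" and R: "R > 0" and t: "\<theta> \<in> {0<..<pi/2}"
  shows "((\<lambda>R. 2 * cos \<theta> * II p (aR p lam R) (cos \<theta>)) has_real_derivative DRR p lam (R, \<theta>)) (at R)"
proof -
  have c: "0 \<le> cos \<theta>" "cos \<theta> < 1" using cos_facts(2,3)[of \<theta>] t by auto
  have "((\<lambda>R. II p (aR p lam R) (cos \<theta>)) has_real_derivative IA p (aR p lam R) (cos \<theta>) * aR' p lam R) (at R)"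
    by (rule DERIV_chain'[OF aR_facts(6)[OF p lam R] IA_deriv[OF p c aR_facts(1)[OF p lam R]]])
  then have "((\<lambda>R. 2 * cos \<theta> * II p (aR p lam R) (cos \<theta>)) has_real_derivative 2 * cos \<theta> * (IA p (aR p lam R) (cos \<theta>) * aR' p lam R)) (at R)"
    by (rule DERIV_cmult)
  then show ?thesis unfolding DRR_def by simp
qed

theorem lemma5p1:
  fixes p lam :: real
  assumes "p > 1" and "lam > 0"
  shows
    "continuous_on ({0<..} \<times> {0..<pi/2}) (\<lambda>z. phi p lam (fst z) (snd z))
   \<and> (\<forall>R>0. \<forall>\<theta>\<in>{0..<pi/2}. phi p lam R \<theta> > 0)
   \<and> (\<exists>DR DT. continuous_on ({0<..} \<times> {0<..<pi/2}) DR
        \<and> continuous_on ({0<..} \<times> {0<..<pi/2}) DT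
        \<and> (\<forall>z\<in>{0<..} \<times> {0<..<pi/2}.
             ((\<lambda>w. phi p lam (fst w) (snd w)) has_derivative
                (\<lambda>h. DR z * fst h + DT z * snd h)) (at z)))
   \<and> (\<forall>\<theta>\<in>{0..<pi/2}.
          (\<forall>R1 R2. 0 < R1 \<longrightarrow> R1 < R2 \<longrightarrow> phi p lam R2 \<theta> < phi p lam R1 \<theta>)
        \<and> ((\<lambda>R. phi p lam R \<theta>) \<longlongrightarrow> 0) at_top
        \<and> ((\<lambda>R. phi p lam R \<theta>) \<longlongrightarrow> pi - 2 * \<theta>) (at_right 0)
        \<and> (\<forall>R>0. phi p lam R \<theta> < pi - 2 * \<theta>))
   \<and> continuous_on ({0<..} \<times> {0..pi/2}) (\<lambda>z. phi_ext p lam (fst z) (snd z))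
   \<and> (\<exists>D. continuous_on ({0<..} \<times> {0<..pi/2}) D
        \<and> (\<forall>R>0. \<forall>\<theta>\<in>{0<..pi/2}.
             ((\<lambda>t. phi_ext p lam R t) has_real_derivative D (R, \<theta>)) (at \<theta> within {0..pi/2}))
        \<and> (\<forall>R>0. D (R, pi/2) = -2))"
proof -
  note p = assms(1) and lam = assms(2)
  define H where "H z = 2 * cos (snd z) * II p (aR p lam (fst z)) (cos (snd z))" for z :: "real \<times> real"
  have Hc: "continuous_on ({0<..} \<times> {0..pi/2}) H" unfolding H_def[abs_def] by (rule H_cont[OF p lam])
  have P1: "continuous_on ({0<..} \<times> {0..<pi/2}) (\<lambda>z. phi p lam (fst z) (snd z))"
  proof (rule continuous_on_eq[OF continuous_on_subset[OF Hc]])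
    show "{0<..} \<times> {0..<pi/2} \<subseteq> {0<..} \<times> {0..pi/2::real}" by auto
    fix z :: "real \<times> real" assume z: "z \<in> {0<..} \<times> {0..<pi/2}"
    then show "H z = phi p lam (fst z) (snd z)"
      using phi_H(2)[OF p lam, of "fst z" "snd z"] by (auto simp: H_def)
  qed
  have P5: "continuous_on ({0<..} \<times> {0..pi/2}) (\<lambda>z. phi_ext p lam (fst z) (snd z))"
  proof (rule continuous_on_eq[OF Hc])
    fix z :: "real \<times> real" assume z: "z \<in> {0<..} \<times> {0..pi/2}"
    then show "H z = phi_ext p lam (fst z) (snd z)"
      using phi_H(1)[OF p lam, of "fst z" "snd z"] by (auto simp: H_def)
  qed
  have P2: "\<forall>R>0. \<forall>\<theta>\<in>{0..<pi/2}. phi p lam R \<theta> > 0"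
  proof (intro allI impI ballI)
    fix R \<theta> :: real assume R: "R > 0" and t: "\<theta> \<in> {0..<pi/2}"
    have c: "0 < cos \<theta>" using cos_facts(1)[OF t] .
    have "II p (aR p lam R) (cos \<theta>) > 0"
      by (rule II_pos[OF p aR_facts(2)[OF p lam less_imp_le[OF R]]]) (use c in auto)
    then show "phi p lam R \<theta> > 0" using phi_H(2)[OF p lam R, of \<theta>] t c by auto
  qed
  have P3: "\<exists>DR DT. continuous_on ({0<..} \<times> {0<..<pi/2}) DR
        \<and> continuous_on ({0<..} \<times> {0<..<pi/2}) DT
        \<and> (\<forall>z\<in>{0<..} \<times> {0<..<pi/2}.
             ((\<lambda>w. phi p lam (fst w) (snd w)) has_derivative
                (\<lambda>h. DR z * fst h + DT z * snd h)) (at z))"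
  proof (intro exI conjI ballI)
    show "continuous_on ({0<..} \<times> {0<..<pi/2}) (DRR p lam)" by (rule DRR_cont[OF p lam])
    show "continuous_on ({0<..} \<times> {0<..<pi/2}) (DD p lam)"
      by (rule continuous_on_subset[OF DD_cont[OF p lam]]) auto
    fix z :: "real \<times> real" assume z: "z \<in> {0<..} \<times> {0<..<pi/2}"
    obtain R \<theta> where zR: "z = (R, \<theta>)" by (cases z)
    have R: "R > 0" and t: "\<theta> \<in> {0<..<pi/2}" using z zR by auto
    have fx: "((\<lambda>x. phi p lam x \<theta>) has_derivative (*) (DRR p lam (R, \<theta>))) (at R within {0<..})"
    proof -
      have "((\<lambda>x. phi p lam x \<theta>) has_real_derivative DRR p lam (R, \<theta>)) (at R)"
      proof (rule has_field_derivative_transform_within_open[OF H_deriv_R[OF p lam R t]])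
        show "open {0::real<..}" by simp
        show "R \<in> {0<..}" using R by simp
        fix x :: real assume "x \<in> {0<..}"
        then show "2 * cos \<theta> * II p (aR p lam x) (cos \<theta>) = phi p lam x \<theta>"
          using phi_H(2)[OF p lam, of x \<theta>] t by auto
      qed
      then have "((\<lambda>x. phi p lam x \<theta>) has_real_derivative DRR p lam (R, \<theta>)) (at R within {0<..})"
        by (rule has_field_derivative_at_within)
      then show ?thesis unfolding has_field_derivative_def .
    qed
    have fy: "((\<lambda>y. phi p lam x y) has_derivative blinfun_apply (blinfun_mult_right (DD p lam (x, y)))) (at y within {0<..<pi/2})"
      if x: "x \<in> {0<..}" and y: "y \<in> {0<..<pi/2}" for x y
    proof -
      have "((\<lambda>y. phi p lam x y) has_real_derivative DD p lam (x, y)) (at y)"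
      proof (rule has_field_derivative_transform_within_open[OF H_deriv_theta[OF p lam _ y]])
        show "0 < x" using x by simp
        show "open {0<..<pi/2::real}" by simp
        show "y \<in> {0<..<pi/2}" using y by simp
        fix t :: real assume "t \<in> {0<..<pi/2}"
        then show "2 * cos t * II p (aR p lam x) (cos t) = phi p lam x t"
          using phi_H(2)[OF p lam, of x t] x by auto
      qed
      then have "((\<lambda>y. phi p lam x y) has_real_derivative DD p lam (x, y)) (at y within {0<..<pi/2})"
        by (rule has_field_derivative_at_within)
      then show ?thesis unfolding has_field_derivative_eq_has_derivative_blinfun .
    qed
    have fyc: "continuous (at (R, \<theta>) within {0<..} \<times> {0<..<pi/2}) (\<lambda>(x, y). blinfun_mult_right (DD p lam (x, y)))"
    proof -
      have "continuous_on ({0<..} \<times> {0<..<pi/2}) (\<lambda>z. blinfun_mult_right (DD p lam z))"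
        by (intro continuous_intros continuous_on_subset[OF DD_cont[OF p lam]]) auto
      then have "continuous (at (R, \<theta>) within {0<..} \<times> {0<..<pi/2}) (\<lambda>z. blinfun_mult_right (DD p lam z))"
        using R t by (simp add: continuous_on_eq_continuous_within)
      then show ?thesis by (simp add: case_prod_beta')
    qed
    have "((\<lambda>(x, y). phi p lam x y) has_derivative (\<lambda>(tx, ty). DRR p lam (R, \<theta>) * tx + blinfun_apply (blinfun_mult_right (DD p lam (R, \<theta>))) ty))
        (at (R, \<theta>) within {0<..} \<times> {0<..<pi/2})"
      by (rule has_derivative_partialsI[OF fx fy fyc t]) auto
    moreover have "at (R, \<theta>) within {0<..} \<times> {0<..<pi/2} = at (R, \<theta>)"
      by (rule at_within_open) (use R t in \<open>auto intro: open_Times\<close>)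
    moreover have "(\<lambda>(x, y). phi p lam x y) = (\<lambda>w. phi p lam (fst w) (snd w))" by (simp add: fun_eq_iff)
    moreover have "(\<lambda>(tx, ty). DRR p lam (R, \<theta>) * tx + blinfun_apply (blinfun_mult_right (DD p lam (R, \<theta>))) ty)
        = (\<lambda>h. DRR p lam z * fst h + DD p lam z * snd h)" by (simp add: fun_eq_iff zR)
    ultimately show "((\<lambda>w. phi p lam (fst w) (snd w)) has_derivative (\<lambda>h. DRR p lam z * fst h + DD p lam z * snd h)) (at z)"
      using zR by simp
  qed
  have P4: "\<forall>\<theta>\<in>{0..<pi/2}.
          (\<forall>R1 R2. 0 < R1 \<longrightarrow> R1 < R2 \<longrightarrow> phi p lam R2 \<theta> < phi p lam R1 \<theta>)
        \<and> ((\<lambda>R. phi p lam R \<theta>) \<longlongrightarrow> 0) at_top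
        \<and> ((\<lambda>R. phi p lam R \<theta>) \<longlongrightarrow> pi - 2 * \<theta>) (at_right 0)
        \<and> (\<forall>R>0. phi p lam R \<theta> < pi - 2 * \<theta>)"
  proof (intro ballI conjI allI impI)
    fix \<theta> :: real assume t: "\<theta> \<in> {0..<pi/2}"
    define c where "c = cos \<theta>"
    have c: "0 < c" "c \<le> 1" using cos_facts(1)[OF t] by (auto simp: c_def)
    have ph: "phi p lam R \<theta> = 2 * c * II p (aR p lam R) c" if "R > 0" for R
      using phi_H(2)[OF p lam that, of \<theta>] t by (auto simp: c_def)
    have lim0: "2 * c * II p 0 c = pi - 2 * \<theta>"
    proof -
      have "2 * c * II p 0 c = 2 * arcsin c" using II_a0[OF p c] c by simp
      also have "arcsin c = pi/2 - \<theta>"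
      proof -
        have "sin (pi/2 - \<theta>) = c" unfolding c_def by (simp add: sin_diff)
        moreover have "arcsin (sin (pi/2 - \<theta>)) = pi/2 - \<theta>" by (rule arcsin_sin) (use t in auto)
        ultimately show ?thesis by simp
      qed
      finally show ?thesis by simp
    qed
    fix R1 R2 :: real
    {
      assume R1: "0 < R1" and R12: "R1 < R2"
      have "II p (aR p lam R2) c < II p (aR p lam R1) c"
        by (rule II_strict[OF p aR_facts(2)[OF p lam] aR_facts(7)[OF p lam R1 R12] c]) (use R1 in auto)
      then show "phi p lam R2 \<theta> < phi p lam R1 \<theta>" using ph[OF R1] ph[of R2] R1 R12 c by simp
    }
    {
      assume R: "R1 > 0"
      have "II p (aR p lam R1) c < II p 0 c"
        by (rule II_strict[OF p _ aR_facts(1)[OF p lam R] c]) simp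
      then have "2 * c * II p (aR p lam R1) c < 2 * c * II p 0 c"
        by (rule mult_strict_left_mono) (use c in auto)
      then show "phi p lam R1 \<theta> < pi - 2 * \<theta>" using ph[OF R] lim0 by simp
    }
  next
    fix \<theta> :: real assume t: "\<theta> \<in> {0..<pi/2}"
    define c where "c = cos \<theta>"
    have c: "0 < c" "c \<le> 1" using cos_facts(1)[OF t] by (auto simp: c_def)
    have ph: "phi p lam R \<theta> = 2 * c * II p (aR p lam R) c" if "R > 0" for R
      using phi_H(2)[OF p lam that, of \<theta>] t by (auto simp: c_def)
    have K: "c powr (p+1) > 0" using c by simp
    show "((\<lambda>R. phi p lam R \<theta>) \<longlongrightarrow> 0) at_top"
    proof (rule tendsto_sandwich[where f = "\<lambda>_. 0" and h = "\<lambda>R. 2 * c * (2 * (1 / sqrt (1 + aR p lam R * c powr (p+1))))"])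
      show "\<forall>\<^sub>F R in at_top. 0 \<le> phi p lam R \<theta>"
        using eventually_gt_at_top[of 0]
      proof eventually_elim
        case (elim R)
        show ?case using P2[rule_format, of R \<theta>] t elim by simp
      qed
      show "\<forall>\<^sub>F R in at_top. phi p lam R \<theta> \<le> 2 * c * (2 * (1 / sqrt (1 + aR p lam R * c powr (p+1))))"
        using eventually_gt_at_top[of 0]
      proof eventually_elim
        case (elim R)
        have "II p (aR p lam R) c \<le> 2 * (1 / sqrt (1 + aR p lam R * c powr (p+1)))"
          by (rule II_bound[OF p aR_facts(2)[OF p lam]]) (use elim c in auto)
        then have "2 * c * II p (aR p lam R) c \<le> 2 * c * (2 * (1 / sqrt (1 + aR p lam R * c powr (p+1))))"
          by (rule mult_left_mono) (use c in auto)
        then show ?case using ph[OF elim] by simp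
      qed
      show "((\<lambda>_. 0) \<longlongrightarrow> (0::real)) at_top" by simp
      have "((\<lambda>R. 1 / sqrt (1 + 2 * R powr (p - 1) / (lam * (p + 1)) * c powr (p+1))) \<longlongrightarrow> 0) at_top"
        by (rule RA3[OF p lam K])
      then have "((\<lambda>R. 2 * c * (2 * (1 / sqrt (1 + aR p lam R * c powr (p+1))))) \<longlongrightarrow> 2 * c * (2 * 0)) at_top"
        unfolding aR_def by (intro tendsto_intros)
      then show "((\<lambda>R. 2 * c * (2 * (1 / sqrt (1 + aR p lam R * c powr (p+1))))) \<longlongrightarrow> 0) at_top" by simp
    qed
    have lim0: "2 * c * II p 0 c = pi - 2 * \<theta>"
    proof -
      have "2 * c * II p 0 c = 2 * arcsin c" using II_a0[OF p c] c by simp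
      also have "arcsin c = pi/2 - \<theta>"
      proof -
        have "sin (pi/2 - \<theta>) = c" unfolding c_def by (simp add: sin_diff)
        moreover have "arcsin (sin (pi/2 - \<theta>)) = pi/2 - \<theta>" by (rule arcsin_sin) (use t in auto)
        ultimately show ?thesis by simp
      qed
      finally show ?thesis by simp
    qed
    have ci: "continuous_on {0..} (\<lambda>a. II p a c)"
      by (rule comp_cont2[OF II_cont[OF p] continuous_on_id continuous_on_const]) (use c in auto)
    then have ci0: "continuous (at 0 within {0..}) (\<lambda>a. II p a c)"
      by (simp add: continuous_on_eq_continuous_within)
    have "((\<lambda>R. II p (aR p lam R) c) \<longlongrightarrow> II p 0 c) (at_right 0)"
    proof (rule continuous_within_tendsto_compose[OF ci0 _ aR_facts(8)[OF p lam]])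
      show "\<forall>\<^sub>F R in at_right 0. aR p lam R \<in> {0..}"
        using eventually_at_right_less[of 0] by eventually_elim (use aR_facts(2)[OF p lam] in auto)
    qed
    then have "((\<lambda>R. 2 * c * II p (aR p lam R) c) \<longlongrightarrow> 2 * c * II p 0 c) (at_right 0)"
      by (intro tendsto_intros)
    then have "((\<lambda>R. 2 * c * II p (aR p lam R) c) \<longlongrightarrow> pi - 2 * \<theta>) (at_right 0)" by (simp only: lim0)
    then show "((\<lambda>R. phi p lam R \<theta>) \<longlongrightarrow> pi - 2 * \<theta>) (at_right 0)"
    proof (rule Lim_transform_eventually)
      show "\<forall>\<^sub>F R in at_right 0. 2 * c * II p (aR p lam R) c = phi p lam R \<theta>"
        using eventually_at_right_less[of 0] by eventually_elim (use ph in auto)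
    qed
  qed
  have P6: "\<exists>D. continuous_on ({0<..} \<times> {0<..pi/2}) D
        \<and> (\<forall>R>0. \<forall>\<theta>\<in>{0<..pi/2}.
             ((\<lambda>t. phi_ext p lam R t) has_real_derivative D (R, \<theta>)) (at \<theta> within {0..pi/2}))
        \<and> (\<forall>R>0. D (R, pi/2) = -2)"
  proof (intro exI conjI allI impI ballI)
    show "continuous_on ({0<..} \<times> {0<..pi/2}) (DD p lam)" by (rule DD_cont[OF p lam])
    fix R :: real assume R: "R > 0"
    show "DD p lam (R, pi/2) = -2" by (simp add: DD_def II_c0[OF p])
    fix \<theta> :: real assume t: "\<theta> \<in> {0<..pi/2}"
    have HD: "((\<lambda>t. 2 * cos t * II p (aR p lam R) (cos t)) has_real_derivative DD p lam (R, \<theta>)) (at \<theta> within {0..pi/2})"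
    proof (cases "\<theta> = pi/2")
      case False
      then have t': "\<theta> \<in> {0<..<pi/2}" using t by auto
      show ?thesis by (rule has_field_derivative_at_within[OF H_deriv_theta[OF p lam R t']])
    next
      case True
      have u: "((\<lambda>t. 2 * cos t) has_real_derivative 2 * - sin \<theta>) (at \<theta> within {0..pi/2})"
        by (rule DERIV_cmult[OF has_field_derivative_at_within[OF DERIV_cos]])
      have u0: "2 * cos \<theta> = 0" using True by (simp only: True cos_pi_half mult_zero_right)
      have vc: "continuous_on {0..pi/2} (\<lambda>t. II p (aR p lam R) (cos t))"
      proof (rule comp_cont2[OF II_cont[OF p] continuous_on_const])
        show "continuous_on {0..pi/2} cos" by (intro continuous_intros)
        fix t :: real assume "t \<in> {0..pi/2}"
        then show "(aR p lam R, cos t) \<in> {0..} \<times> {0..1}"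
          using aR_facts(2)[OF p lam, of R] cos_facts(2)[of t] R by auto
      qed
      then have v: "continuous (at \<theta> within {0..pi/2}) (\<lambda>t. II p (aR p lam R) (cos t))"
        using t by (simp add: continuous_on_eq_continuous_within)
      have "((\<lambda>t. 2 * cos t * II p (aR p lam R) (cos t)) has_real_derivative (2 * - sin \<theta>) * II p (aR p lam R) (cos \<theta>)) (at \<theta> within {0..pi/2})"
        by (rule deriv_mult_zero[OF u u0 v])
      moreover have "(2 * - sin \<theta>) * II p (aR p lam R) (cos \<theta>) = DD p lam (R, \<theta>)"
        unfolding DD_def using u0 by simp
      ultimately show ?thesis by simp
    qed
    show "((\<lambda>t. phi_ext p lam R t) has_real_derivative DD p lam (R, \<theta>)) (at \<theta> within {0..pi/2})"
    proof (rule has_field_derivative_transform_within[OF HD zero_less_one])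
      show "\<theta> \<in> {0..pi/2}" using t by auto
      fix x :: real assume "x \<in> {0..pi/2}"
      then show "2 * cos x * II p (aR p lam R) (cos x) = phi_ext p lam R x"
        using phi_H(1)[OF p lam R, of x] by simp
    qed
  qed
  show ?thesis using P1 P2 P3 P4 P5 P6 by blast
qed

end
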